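(* Let $A$ be a unital C*-algebra and $\varepsilon:A\to\mathbb{C}$ a character (nonzero multiplicative linear functional). Let $u$ be a non-zero bounded linear functional on $A$ such that $u(1)=0$ and $u(x^*x)\ge0$ for all $x\in A$ with $\varepsilon(x^*x)=0$. Then $u=r(v-\varepsilon)$ for some $r>0$ and some state $v$ on $A$. *)

theory Defs
  imports "HOL-Analysis.Analysis" "HOL-Library.Complex_Order"
begin

locale unital_cstar_algebra =
  fixes scaleC :: "complex \<Rightarrow> 'a::{banach, real_normed_algebra_1} \<Rightarrow> 'a"
    and star :: "'a \<Rightarrow> 'a"
  assumes scaleC_of_real: "\<And>r x. scaleC (complex_of_real r) x = scaleR r x"
    and scaleC_add_left: "\<And>a b x. scaleC (a + b) x = scaleC a x + scaleC b x"
    and scaleC_add_right: "\<And>a x y. scaleC a (x + y) = scaleC a x + scaleC a y"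
    and scaleC_scaleC: "\<And>a b x. scaleC a (scaleC b x) = scaleC (a * b) x"
    and scaleC_one: "\<And>x. scaleC 1 x = x"
    and norm_scaleC: "\<And>a x. norm (scaleC a x) = cmod a * norm x"
    and scaleC_mult_left: "\<And>a x y. scaleC a x * y = scaleC a (x * y)"
    and scaleC_mult_right: "\<And>a x y. x * scaleC a y = scaleC a (x * y)"
    and star_add: "\<And>x y. star (x + y) = star x + star y"
    and star_scaleC: "\<And>a x. star (scaleC a x) = scaleC (cnj a) (star x)"
    and star_mult: "\<And>x y. star (x * y) = star y * star x"
    and star_star: "\<And>x. star (star x) = x"
    and cstar_identity: "\<And>x. norm (star x * x) = norm x ^ 2"

definition clinear_functional ::
  "(complex \<Rightarrow> 'a \<Rightarrow> 'a::real_vector) \<Rightarrow> ('a \<Rightarrow> complex) \<Rightarrow> bool" where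
  "clinear_functional scaleC f \<longleftrightarrow>
     (\<forall>x y. f (x + y) = f x + f y) \<and> (\<forall>a x. f (scaleC a x) = a * f x)"

definition bounded_functional :: "('a::real_normed_vector \<Rightarrow> complex) \<Rightarrow> bool" where
  "bounded_functional f \<longleftrightarrow> (\<exists>K. \<forall>x. cmod (f x) \<le> K * norm x)"

definition character ::
  "(complex \<Rightarrow> 'a \<Rightarrow> 'a::{real_vector, times}) \<Rightarrow> ('a \<Rightarrow> complex) \<Rightarrow> bool" where
  "character scaleC f \<longleftrightarrow> clinear_functional scaleC f \<and>
     (\<forall>x y. f (x * y) = f x * f y) \<and> (\<exists>x. f x \<noteq> 0)"

definition cstar_state ::
  "(complex \<Rightarrow> 'a \<Rightarrow> 'a::{real_vector, monoid_mult}) \<Rightarrow> ('a \<Rightarrow> 'a) \<Rightarrow> ('a \<Rightarrow> complex) \<Rightarrow> bool" where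
  "cstar_state scaleC star v \<longleftrightarrow> clinear_functional scaleC v \<and>
     (\<forall>x. 0 \<le> v (star x * x)) \<and> v 1 = 1"

end

theory Submission
  imports Defs
begin


context unital_cstar_algebra begin

lemma scaleC_zero_right[simp]: "scaleC a 0 = 0"
  using scaleC_add_right[of a 0 0] by simp

lemma scaleC_zero_left[simp]: "scaleC 0 x = 0"
  using scaleC_of_real[of 0 x] by simp

lemma scaleC_minus_left: "scaleC (- a) x = - scaleC a x"
  using scaleC_add_left[of a "-a" x] by (simp) (metis add.inverse_unique)

lemma scaleC_minus_right: "scaleC a (- x) = - scaleC a x"
  using scaleC_add_right[of a x "-x"] by (simp) (metis add.inverse_unique)

lemma scaleC_diff_left: "scaleC (a - b) x = scaleC a x - scaleC b x"
  using scaleC_add_left[of a "-b" x] by (simp add: scaleC_minus_left)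

lemma scaleC_diff_right: "scaleC a (x - y) = scaleC a x - scaleC a y"
  using scaleC_add_right[of a x "-y"] by (simp add: scaleC_minus_right)

lemma star_zero[simp]: "star 0 = 0"
  using star_add[of 0 0] by simp

lemma star_minus: "star (- x) = - star x"
  using star_add[of x "-x"] by (simp) (metis add.inverse_unique)

lemma star_diff: "star (x - y) = star x - star y"
  using star_add[of x "-y"] by (simp add: star_minus)

lemma star_one[simp]: "star 1 = 1"
proof -
  have "star (star 1 * 1) = star 1 * star (star 1)" by (rule star_mult)
  thus ?thesis by (simp add: star_star)
qed

lemma norm_star[simp]: "norm (star x) = norm x"
proof -
  have A: "norm y \<le> norm (star y)" for y
  proof (cases "y = 0")
    case True thus ?thesis by simp
  next
    case False
    have "norm y ^ 2 = norm (star y * y)" by (simp add: cstar_identity)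
    also have "\<dots> \<le> norm (star y) * norm y" by (rule norm_mult_ineq)
    finally have "norm y * norm y \<le> norm (star y) * norm y" by (simp add: power2_eq_square)
    thus ?thesis using False by simp
  qed
  show ?thesis using A[of x] A[of "star x"] by (simp add: star_star)
qed

lemma cstar_identity': "norm (x * star x) = norm x ^ 2"
  using cstar_identity[of "star x"] by (simp add: star_star)

lemma star_scaleR: "star (scaleR r x) = scaleR r (star x)"
  using star_scaleC[of "complex_of_real r" x] by (simp add: scaleC_of_real)

lemma star_scaleC_one: "star (scaleC a 1) = scaleC (cnj a) 1"
  by (simp add: star_scaleC)

lemma scaleC_one_mult: "scaleC a 1 * x = scaleC a x"
  by (simp add: scaleC_mult_left)

lemma mult_scaleC_one: "x * scaleC a 1 = scaleC a x"
  by (simp add: scaleC_mult_right)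

lemma scaleC_commute_one: "scaleC a 1 * x = x * scaleC a 1"
  by (simp add: scaleC_mult_left scaleC_mult_right)

lemma norm_scaleC_one: "norm (scaleC a 1) = cmod a"
  by (simp add: norm_scaleC)

end

lemma clf_zero: "clinear_functional sc f \<Longrightarrow> f 0 = 0"
  unfolding clinear_functional_def by (metis add.right_neutral add_cancel_right_right)

lemma clf_add: "clinear_functional sc f \<Longrightarrow> f (x + y) = f x + f y"
  unfolding clinear_functional_def by blast

lemma clf_scale: "clinear_functional sc f \<Longrightarrow> f (sc a x) = a * f x"
  unfolding clinear_functional_def by blast

lemma clf_minus: "clinear_functional sc f \<Longrightarrow> f (- x) = - f x"
  using clf_add[of sc f x "-x"] clf_zero[of sc f] by (simp) (metis add.inverse_unique)

lemma clf_diff: "clinear_functional sc f \<Longrightarrow> f (x - y) = f x - f y"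
  using clf_add[of sc f x "-y"] clf_minus[of sc f y] by simp



lemma neumann:
  fixes z :: "'a::{real_normed_algebra_1, banach}"
  assumes "norm z < 1"
  shows "\<exists>w. (1 - z) * w = 1 \<and> w * (1 - z) = 1"
proof -
  have s: "summable (\<lambda>n. z^n)" by (rule complete_algebra_summable_geometric[OF assms])
  have t: "(\<lambda>n. z^n - z^Suc n) sums (z^0 - 0)"
    by (rule telescope_sums'[OF LIMSEQ_power_zero[OF assms]])
  have e1: "(1 - z) * z^n = z^n - z^Suc n" for n
    by (simp add: algebra_simps)
  have e2: "z^n * (1 - z) = z^n - z^Suc n" for n
    by (simp add: algebra_simps power_Suc2 power_commutes)
  have "(\<lambda>n. (1 - z) * z^n) sums ((1-z) * suminf (\<lambda>n. z^n))"
    using sums_mult[OF summable_sums[OF s]] .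
  hence a: "(1-z) * suminf (\<lambda>n. z^n) = 1" using t unfolding e1 by (metis sums_unique2 power_0 diff_zero)
  have "(\<lambda>n. z^n * (1 - z)) sums (suminf (\<lambda>n. z^n) * (1-z))"
    using sums_mult2[OF summable_sums[OF s]] .
  hence b: "suminf (\<lambda>n. z^n) * (1-z) = 1" using t unfolding e2 by (metis sums_unique2 power_0 diff_zero)
  from a b show ?thesis by blast
qed

context unital_cstar_algebra begin

lemma scaleC_mult_both: "scaleC a x * scaleC b y = scaleC (a*b) (x*y)"
  by (simp add: scaleC_mult_left scaleC_mult_right scaleC_scaleC mult.commute)

lemma star_shift_mult:
  assumes "star h = h"
  shows "star (h + scaleC c 1) * (h + scaleC c 1) = h*h + scaleC (c + cnj c) h + scaleC (cnj c * c) 1"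
proof -
  have "star (h + scaleC c 1) = h + scaleC (cnj c) 1" using assms by (simp add: star_add star_scaleC)
  hence "star (h + scaleC c 1) * (h + scaleC c 1) = h*h + scaleC c h + scaleC (cnj c) h + scaleC (cnj c * c) 1"
    by (simp add: distrib_left distrib_right scaleC_mult_left scaleC_mult_right scaleC_scaleC add.assoc mult.commute scaleC_add_right)
  thus ?thesis by (simp add: scaleC_add_left add.assoc)
qed

lemma norm_shift:
  assumes "star h = h"
  shows "norm (h + scaleC (\<i> * of_real s) 1) ^ 2 \<le> norm h ^ 2 + s^2"
proof -
  have cc: "cnj (\<i> * of_real s) * (\<i> * of_real s) = of_real (s^2)"
    by (simp add: complex_eq_iff power2_eq_square)
  have "norm (h + scaleC (\<i> * of_real s) 1) ^ 2 = norm (h*h + scaleC (of_real (s^2)) 1)"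
    using cstar_identity[of "h + scaleC (\<i> * of_real s) 1"] star_shift_mult[OF assms, of "\<i> * of_real s"]
    unfolding cc by simp
  also have "\<dots> \<le> norm (h*h) + norm (scaleC (of_real (s^2)) 1)" by (rule norm_triangle_ineq)
  also have "\<dots> \<le> norm h ^ 2 + s^2"
    using cstar_identity[of h] assms by (simp add: norm_scaleC norm_power)
  finally show ?thesis .
qed

lemma shift_invertible:
  assumes "star h = h" "t \<noteq> 0"
  shows "\<exists>R. (h + scaleC (\<i> * of_real t) 1) * R = 1 \<and> R * (h + scaleC (\<i> * of_real t) 1) = 1"
proof -
  define s where "s = - (norm h ^ 2 + 1) / (2 * t)"
  define a where "a = h + scaleC (\<i> * of_real s) 1"
  define c where "c = \<i> * of_real (s - t)"
  define z where "z = scaleC (1/c) a"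
  have st: "2 * s * t = - (norm h ^ 2 + 1)" unfolding s_def using assms(2) by (simp add: field_simps)
  have na: "norm a ^ 2 \<le> norm h ^ 2 + s^2" unfolding a_def by (rule norm_shift[OF assms(1)])
  have sq: "(s - t)^2 = s^2 + norm h ^ 2 + 1 + t^2" using st by (simp add: power2_eq_square algebra_simps)
  have "norm a ^ 2 < (s - t)^2" using na sq by (smt (verit) zero_le_power2)
  hence lt: "norm a < \<bar>s - t\<bar>" using power2_less_imp_less[of "norm a" "\<bar>s-t\<bar>"] by simp
  have cn: "cmod c = \<bar>s - t\<bar>" unfolding c_def by (simp add: norm_mult del: of_real_diff)
  hence c0: "c \<noteq> 0" using lt by auto
  have nz: "norm z < 1" unfolding z_def using lt cn c0 by (simp add: norm_scaleC norm_divide divide_less_eq)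
  obtain w where w: "(1 - z) * w = 1" "w * (1 - z) = 1" using neumann[OF nz] by blast
  have X: "h + scaleC (\<i> * of_real t) 1 = scaleC (-c) (1 - z)"
  proof -
    have "scaleC (-c) (1 - z) = scaleC (-c) 1 - scaleC ((-c) * (1/c)) a"
      unfolding z_def by (simp add: scaleC_diff_right scaleC_scaleC)
    also have "(-c) * (1/c) = -1" using c0 by simp
    also have "scaleC (-c) 1 - scaleC (-1) a = a - scaleC c 1" by (simp add: scaleC_one scaleC_minus_left)
    also have "\<dots> = h + scaleC (\<i> * of_real t) 1"
    proof -
      have "scaleC (\<i> * of_real s) 1 = scaleC (\<i> * of_real t) 1 + scaleC c 1"
        unfolding c_def scaleC_add_left[symmetric] by (simp add: algebra_simps)
      thus ?thesis by (simp add: a_def)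
    qed
    finally show ?thesis by simp
  qed
  have "(h + scaleC (\<i> * of_real t) 1) * scaleC (-1/c) w = 1"
    unfolding X scaleC_mult_both using c0 w by (simp add: scaleC_one)
  moreover have "scaleC (-1/c) w * (h + scaleC (\<i> * of_real t) 1) = 1"
    unfolding X scaleC_mult_both using c0 w by (simp add: scaleC_one)
  ultimately show ?thesis by blast
qed

end


context unital_cstar_algebra begin

lemma char_one:
  assumes "character scaleC e" shows "e 1 = 1"
proof -
  from assms obtain x where x: "e x \<noteq> 0" and m: "\<And>a b. e (a*b) = e a * e b"
    unfolding character_def by blast
  have "e x = e 1 * e x" using m[of 1 x] by simp
  thus ?thesis using x by simp
qed

lemma char_bound:
  assumes "character scaleC e" shows "cmod (e z) \<le> norm z"
proof (rule ccontr)
  assume "\<not> cmod (e z) \<le> norm z"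
  hence lt: "norm z < cmod (e z)" by simp
  have lin: "clinear_functional scaleC e" and m: "\<And>a b. e (a*b) = e a * e b"
    using assms unfolding character_def by blast+
  define l where "l = e z"
  have l0: "l \<noteq> 0" using lt l_def by auto
  define w where "w = scaleC (1/l) z"
  have nw: "norm w < 1" unfolding w_def using lt l0 l_def
    by (simp add: norm_scaleC norm_divide divide_less_eq mult.commute)
  have ew: "e w = 1" unfolding w_def using clf_scale[OF lin] l0 l_def by simp
  obtain R where R: "(1 - w) * R = 1" using neumann[OF nw] by blast
  have "e ((1 - w) * R) = (e 1 - e w) * e R" using m clf_diff[OF lin] by simp
  also have "\<dots> = 0" using ew char_one[OF assms] by simp
  finally show False using R char_one[OF assms] by simp
qed

lemma char_real:
  assumes "character scaleC e" "star h = h" shows "Im (e h) = 0"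
proof (rule ccontr)
  assume b0: "Im (e h) \<noteq> 0"
  have lin: "clinear_functional scaleC e" using assms unfolding character_def by blast
  define N where "N = norm h ^ 2"
  define a where "a = Re (e h)"
  define b where "b = Im (e h)"
  define s where "s = (N + 1) / (2 * b)"
  have "e (h + scaleC (\<i> * of_real s) 1) = e h + \<i> * of_real s"
    using clf_add[OF lin] clf_scale[OF lin] char_one[OF assms(1)] by simp
  hence "cmod (e h + \<i> * of_real s) \<le> norm (h + scaleC (\<i> * of_real s) 1)"
    using char_bound[OF assms(1), of "h + scaleC (\<i> * of_real s) 1"] by simp
  hence "cmod (e h + \<i> * of_real s) ^ 2 \<le> norm (h + scaleC (\<i> * of_real s) 1) ^ 2"
    by (simp add: power_mono)
  also have "\<dots> \<le> N + s^2" using norm_shift[OF assms(2), of s] N_def by simp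
  finally have "cmod (e h + \<i> * of_real s) ^ 2 \<le> N + s^2" .
  moreover have "cmod (e h + \<i> * of_real s) ^ 2 = a^2 + (b + s)^2"
    unfolding cmod_power2 a_def b_def by simp
  moreover have "2 * b * s = N + 1" unfolding s_def using b0 b_def by simp
  ultimately have "a^2 + b^2 + 1 \<le> 0" by (simp add: power2_eq_square algebra_simps)
  thus False by (smt (verit) zero_le_power2)
qed

lemma char_star:
  assumes "character scaleC e" shows "e (star x) = cnj (e x)"
proof -
  have lin: "clinear_functional scaleC e" using assms unfolding character_def by blast
  have h1: "star (x + star x) = x + star x" by (simp add: star_add star_star add.commute)
  have h2: "star (scaleC \<i> (x - star x)) = scaleC \<i> (x - star x)"
    by (simp add: star_scaleC star_diff star_star scaleC_minus_left scaleC_minus_right[symmetric])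
  have "Im (e (x + star x)) = 0" by (rule char_real[OF assms h1])
  hence i1: "Im (e x) + Im (e (star x)) = 0" using clf_add[OF lin] by simp
  have "Im (e (scaleC \<i> (x - star x))) = 0" by (rule char_real[OF assms h2])
  hence i2: "Re (e x) - Re (e (star x)) = 0" using clf_scale[OF lin] clf_diff[OF lin] by simp
  show ?thesis using i1 i2 by (simp add: complex_eq_iff)
qed

end


context unital_cstar_algebra begin

lemma star_expand:
  "star (a + scaleC c b) * (a + scaleC c b) =
     star a * a + scaleC c (star a * b) + scaleC (cnj c) (star b * a) + scaleC (cnj c * c) (star b * b)"
  by (simp add: star_add star_scaleC distrib_left distrib_right scaleC_mult_left scaleC_mult_right
      scaleC_scaleC add.assoc scaleC_add_right mult.commute[of c "cnj c"])

lemma u_expand: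
  assumes "clinear_functional scaleC u"
  shows "u (star (a + scaleC c b) * (a + scaleC c b)) =
     u (star a * a) + c * u (star a * b) + cnj c * u (star b * a) + (cnj c * c) * u (star b * b)"
  unfolding star_expand using clf_add[OF assms] clf_scale[OF assms] by simp

lemma J_pos:
  assumes "character scaleC e" "\<And>x. e (star x * x) = 0 \<Longrightarrow> 0 \<le> u (star x * x)" "e c = 0"
  shows "0 \<le> u (star c * c)"
proof -
  have "e (star c * c) = 0" using assms(1,3) unfolding character_def by simp
  thus ?thesis using assms(2) by blast
qed

lemma J_lin:
  assumes "character scaleC e" "e a = 0" "e b = 0" shows "e (a + scaleC c b) = 0"
proof -
  have lin: "clinear_functional scaleC e" using assms unfolding character_def by blast
  show ?thesis using clf_add[OF lin] clf_scale[OF lin] assms by simp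
qed

lemma J_herm:
  assumes ch: "character scaleC e" and pos: "\<And>x. e (star x * x) = 0 \<Longrightarrow> 0 \<le> u (star x * x)"
    and lin: "clinear_functional scaleC u" and a: "e a = 0" and b: "e b = 0"
  shows "u (star b * a) = cnj (u (star a * b))"
proof -
  have pa: "0 \<le> u (star a * a)" by (rule J_pos[where u=u, OF ch pos a])
  have pb: "0 \<le> u (star b * b)" by (rule J_pos[where u=u, OF ch pos b])
  have p1: "0 \<le> u (star (a + scaleC 1 b) * (a + scaleC 1 b))"
    by (rule J_pos[where u=u, OF ch pos J_lin[OF ch a b]])
  have p2: "0 \<le> u (star (a + scaleC \<i> b) * (a + scaleC \<i> b))"
    by (rule J_pos[where u=u, OF ch pos J_lin[OF ch a b]])
  have i1: "Im (u (star a * b)) + Im (u (star b * a)) = 0"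
    using p1 pa pb unfolding u_expand[OF lin] by (simp add: less_eq_complex_def)
  have i2: "Re (u (star a * b)) - Re (u (star b * a)) = 0"
    using p2 pa pb unfolding u_expand[OF lin] by (simp add: less_eq_complex_def)
  show ?thesis using i1 i2 by (simp add: complex_eq_iff)
qed

lemma J_CS:
  assumes ch: "character scaleC e" and pos: "\<And>x. e (star x * x) = 0 \<Longrightarrow> 0 \<le> u (star x * x)"
    and lin: "clinear_functional scaleC u" and a: "e a = 0" and b: "e b = 0"
  shows "cmod (u (star a * b)) ^ 2 \<le> Re (u (star a * a)) * Re (u (star b * b))"
proof -
  define \<alpha> where "\<alpha> = Re (u (star a * a))"
  define \<beta> where "\<beta> = Re (u (star b * b))"
  define \<gamma> where "\<gamma> = u (star a * b)"
  define G where "G = cmod \<gamma> ^ 2"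
  have pa: "0 \<le> u (star a * a)" by (rule J_pos[where u=u, OF ch pos a])
  have pb: "0 \<le> u (star b * b)" by (rule J_pos[where u=u, OF ch pos b])
  have qa: "u (star a * a) = of_real \<alpha>" using pa unfolding \<alpha>_def by (simp add: less_eq_complex_def complex_eq_iff)
  have qb: "u (star b * b) = of_real \<beta>" using pb unfolding \<beta>_def by (simp add: less_eq_complex_def complex_eq_iff)
  have b0: "0 \<le> \<beta>" using pb \<beta>_def by (simp add: less_eq_complex_def)
  have qba: "u (star b * a) = cnj \<gamma>" unfolding \<gamma>_def by (rule J_herm[OF ch pos lin a b])
  have key: "0 \<le> \<alpha> - 2*t*G + t^2*G*\<beta>" for t
  proof -
    define c where "c = - of_real t * cnj \<gamma>"
    have "0 \<le> u (star (a + scaleC c b) * (a + scaleC c b))"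
      by (rule J_pos[where u=u, OF ch pos J_lin[OF ch a b]])
    hence "0 \<le> Re (of_real \<alpha> + c * \<gamma> + cnj c * cnj \<gamma> + (cnj c * c) * of_real \<beta>)"
      unfolding u_expand[OF lin] qa qb qba \<gamma>_def[symmetric] by (simp add: less_eq_complex_def)
    thus ?thesis unfolding c_def G_def cmod_power2 by (simp add: algebra_simps power2_eq_square)
  qed
  show ?thesis
  proof (cases "\<beta> = 0")
    case True
    have "G = 0"
    proof (rule ccontr)
      assume "G \<noteq> 0"
      hence Gp: "G > 0" unfolding G_def by simp
      have "0 \<le> \<alpha> - 2*((\<alpha>+1)/(2*G))*G" using key[of "(\<alpha>+1)/(2*G)"] True by simp
      thus False using Gp by simp
    qed
    thus ?thesis unfolding G_def \<gamma>_def[symmetric] \<beta>_def[symmetric] using True by simp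
  next
    case False
    hence bp: "\<beta> > 0" using b0 by simp
    have "0 \<le> \<alpha> - 2*(1/\<beta>)*G + (1/\<beta>)^2*G*\<beta>" by (rule key)
    hence "0 \<le> \<alpha> - G/\<beta>" using bp by (simp add: power2_eq_square field_simps)
    hence "G \<le> \<alpha> * \<beta>" using bp by (simp add: field_simps)
    thus ?thesis unfolding G_def \<gamma>_def \<alpha>_def \<beta>_def .
  qed
qed

end


context unital_cstar_algebra begin

lemma commute_inv:
  fixes X R h :: 'a
  assumes "X * R = 1" "R * X = 1" "h * X = X * h"
  shows "h * R = R * h"
proof -
  have "R * h = R * h * (X * R)" using assms(1) by simp
  also have "\<dots> = R * (h * X) * R" by (simp add: mult.assoc)
  also have "\<dots> = R * (X * h) * R" using assms by simp
  also have "\<dots> = (R * X) * h * R" by (simp add: mult.assoc)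
  also have "\<dots> = h * R" using assms by simp
  finally show ?thesis by simp
qed

lemma approx_unit:
  assumes ch: "character scaleC e" and ey: "e y = 0" and dp: "\<delta> > 0"
  shows "\<exists>f. e f = 0 \<and> e (star f) = 0 \<and> norm f \<le> 1 \<and> norm (y - f * y) \<le> \<delta>"
proof -
  have elin: "clinear_functional scaleC e" and em: "\<And>a b. e (a*b) = e a * e b"
    using ch unfolding character_def by blast+
  define t where "t = \<delta>^2"
  have tp: "t > 0" using dp t_def by simp
  define h where "h = y * star y"
  have hs: "star h = h" unfolding h_def by (simp add: star_mult star_star)
  have eh: "e h = 0" unfolding h_def using em ey by simp
  define k where "k = scaleC (\<i> * of_real t) 1"
  have kc: "k * z = z * k" for z unfolding k_def by (rule scaleC_commute_one)
  have sk: "star k = - k" unfolding k_def by (simp add: star_scaleC scaleC_minus_left)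
  define X where "X = h + k"
  define Y where "Y = h - k"
  have t0: "t \<noteq> 0" using tp by simp
  obtain R where XR: "X * R = 1" and RX: "R * X = 1"
    using shift_invertible[OF hs t0] unfolding X_def k_def by blast
  have sX: "star X = Y" unfolding X_def Y_def by (simp add: star_add hs sk)
  have sY: "star Y = X" using sX star_star by metis
  define R' where "R' = star R"
  have YR': "Y * R' = 1" unfolding R'_def using RX star_mult[of R X] sX by simp
  have R'Y: "R' * Y = 1" unfolding R'_def using XR star_mult[of X R] sX by simp
  have hX: "h * X = X * h" unfolding X_def using kc[of h] by (simp add: algebra_simps)
  have hR: "h * R = R * h" by (rule commute_inv[OF XR RX hX])
  have kR: "k * R = R * k" by (rule kc)
  have XY: "X * Y = Y * X" unfolding X_def Y_def using kc[of h] by (simp add: algebra_simps)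
  have Yeq: "Y = X - k - k" unfolding X_def Y_def by simp
  have RY: "R * Y = Y * R" unfolding Yeq using XR RX kR by (simp add: algebra_simps)
  have R'X: "R' * X = X * R'"
  proof -
    have "star (R * Y) = star (Y * R)" using RY by simp
    thus ?thesis unfolding star_mult R'_def sY by simp
  qed
  define f where "f = h * R"
  define C where "C = Y * R"
  have sC: "star C = R' * X" unfolding C_def R'_def by (simp add: star_mult sY)
  have CC1: "star C * C = 1"
  proof -
    have "star C * C = R' * X * (Y * R)" using sC C_def by simp
    also have "\<dots> = R' * (X * Y) * R" by (simp add: mult.assoc)
    also have "\<dots> = (R' * Y) * (X * R)" unfolding XY by (simp add: mult.assoc)
    finally show ?thesis using R'Y XR by simp
  qed
  have CC2: "C * star C = 1"
  proof -
    have "C * star C = Y * R * (R' * X)" using sC C_def by simp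
    also have "\<dots> = Y * R * (X * R')" using R'X by simp
    also have "\<dots> = Y * (R * X) * R'" by (simp add: mult.assoc)
    finally show ?thesis using RX YR' by simp
  qed
  have nC: "norm C = 1"
  proof -
    have "norm C ^ 2 = 1" using cstar_identity[of C] CC1 by simp
    thus ?thesis using norm_ge_zero[of C] by (simp add: power2_eq_1_iff)
  qed
  have f1: "1 - f = k * R" unfolding f_def using XR unfolding X_def by (simp add: algebra_simps)
  have fC: "f + f = 1 + C"
  proof -
    have "C = (X - k - k) * R" unfolding C_def Yeq ..
    also have "\<dots> = 1 - k * R - k * R" using XR by (simp add: algebra_simps)
    finally have c: "C = 1 - k * R - k * R" .
    have ff: "f = 1 - k * R" using f1 by (simp add: algebra_simps)
    show ?thesis unfolding c ff by (simp add: algebra_simps)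
  qed
  have nf: "norm f \<le> 1"
  proof -
    have "norm (f + f) \<le> norm (1::'a) + norm C" unfolding fC by (rule norm_triangle_ineq)
    hence "norm (scaleR 2 f) \<le> 2" using nC by (simp add: scaleR_2)
    thus ?thesis by simp
  qed
  have ef: "e f = 0" unfolding f_def using em eh by simp
  have esf: "e (star f) = 0" unfolding f_def star_mult using em eh hs by simp
  have sf: "star f = 1 + R' * k"
  proof -
    have "star (1 - f) = star (k * R)" using f1 by simp
    hence "1 - star f = R' * (- k)" unfolding star_diff star_mult R'_def sk by simp
    thus ?thesis by (simp add: algebra_simps)
  qed
  define D where "D = f * star f - f"
  have G: "D + D + D + D = star C - C"
  proof -
    have "D + D + D + D = (f + f) * (star f + star f) - (f + f) - (f + f)"
      unfolding D_def by (simp add: algebra_simps)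
    also have "\<dots> = (1 + C) * (1 + star C) - (1 + C) - (1 + C)"
    proof -
      have "star f + star f = 1 + star C" using fC by (metis star_add star_one)
      thus ?thesis using fC by simp
    qed
    also have "\<dots> = star C - C"
      using CC2 by (simp add: algebra_simps)
    finally show ?thesis .
  qed
  have D4: "D + D + D + D = (4::real) *\<^sub>R D"
  proof -
    have "(4::real) *\<^sub>R D = 2 *\<^sub>R (2 *\<^sub>R D)" by simp
    thus ?thesis unfolding scaleR_2 by (simp add: add.assoc)
  qed
  have nG: "norm D \<le> 1/2"
  proof -
    have "norm (star C - C) \<le> 2" using norm_triangle_ineq4[of "star C" C] nC by simp
    hence "norm ((4::real) *\<^sub>R D) \<le> 2" using G D4 by simp
    thus ?thesis by simp
  qed
  have fR'k: "f * R' * k = D" unfolding D_def sf by (simp add: algebra_simps mult.assoc)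
  have nfR': "t * norm (f * R') \<le> 1/2"
  proof -
    have "f * R' * k = scaleC (\<i> * of_real t) (f * R')" unfolding k_def by (rule mult_scaleC_one)
    hence "norm (f * R' * k) = t * norm (f * R')" using tp by (simp add: norm_scaleC norm_mult)
    thus ?thesis using nG fR'k by simp
  qed
  have E: "(1 - f) * h * star (1 - f) = scaleC (of_real (t^2)) (f * R')"
  proof -
    have "(1 - f) * h * star (1 - f) = k * R * h * (R' * (- k))"
      unfolding f1 star_mult sk R'_def by simp
    also have "\<dots> = - (k * (R * h * R') * k)" by (simp add: mult.assoc)
    also have "k * (R * h * R') * k = k * k * (R * h * R')" by (metis kc mult.assoc)
    also have "R * h * R' = h * R * R'" using hR by simp
    also have "- (k * k * (h * R * R')) = (- (k * k)) * (h * R * R')" by simp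
    also have "- (k * k) = scaleC (of_real (t^2)) 1" unfolding k_def scaleC_mult_both
    proof -
      have "- (\<i> * complex_of_real t * (\<i> * complex_of_real t)) = of_real (t^2)"
        by (simp add: complex_eq_iff power2_eq_square)
      thus "- scaleC (\<i> * complex_of_real t * (\<i> * complex_of_real t)) (1 * 1) = scaleC (of_real (t^2)) 1"
        by (simp add: scaleC_minus_left[symmetric])
    qed
    finally show ?thesis unfolding f_def by (simp add: scaleC_one_mult)
  qed
  have "norm (y - f * y) ^ 2 = norm ((1 - f) * h * star (1 - f))"
    using cstar_identity'[of "(1 - f) * y"] unfolding h_def star_mult
    by (simp add: algebra_simps mult.assoc)
  also have "\<dots> = t^2 * norm (f * R')" unfolding E by (simp add: norm_scaleC norm_power)
  also have "\<dots> \<le> t / 2" using nfR' tp by (simp add: power2_eq_square)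
  also have "\<dots> \<le> \<delta> ^ 2" unfolding t_def using dp by simp
  finally have sq: "norm (y - f * y) ^ 2 \<le> \<delta> ^ 2" .
  have "norm (y - f * y) \<le> \<delta>" using power2_le_imp_le[OF sq] dp by simp
  thus ?thesis using ef esf nf by blast
qed

end


context unital_cstar_algebra begin

lemma u_CS:
  assumes ch: "character scaleC e" and pos: "\<And>x. e (star x * x) = 0 \<Longrightarrow> 0 \<le> u (star x * x)"
    and lin: "clinear_functional scaleC u" and bd: "\<And>x. cmod (u x) \<le> K * norm x" and K0: "K \<ge> 0"
    and ey: "e y = 0"
  shows "cmod (u y) ^ 2 \<le> K * Re (u (star y * y))"
proof -
  define q where "q = Re (u (star y * y))"
  have q0: "q \<ge> 0" using J_pos[where u=u, OF ch pos ey] unfolding q_def by (simp add: less_eq_complex_def)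
  have main: "cmod (u y) \<le> sqrt (K * q) + K * \<delta>" if dp: "\<delta> > 0" for \<delta>
  proof -
    obtain f where ef: "e f = 0" and esf: "e (star f) = 0" and nf: "norm f \<le> 1"
      and nd: "norm (y - f * y) \<le> \<delta>" using approx_unit[OF ch ey dp] by blast
    have cs: "cmod (u (star (star f) * y)) ^ 2 \<le> Re (u (star (star f) * star f)) * Re (u (star y * y))"
      by (rule J_CS[OF ch pos lin esf ey])
    have "Re (u (f * star f)) \<le> cmod (u (f * star f))" by (rule complex_Re_le_cmod)
    also have "\<dots> \<le> K * norm (f * star f)" by (rule bd)
    also have "\<dots> \<le> K * 1"
    proof -
      have "norm (f * star f) \<le> norm f * norm (star f)" by (rule norm_mult_ineq)
      also have "\<dots> \<le> 1" using nf by (simp add: mult_le_one)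
      finally show ?thesis using K0 mult_left_mono[of "norm (f * star f)" 1 K] by simp
    qed
    finally have r1: "Re (u (f * star f)) \<le> K" by simp
    have r0: "0 \<le> Re (u (f * star f))"
      using J_pos[where u=u, OF ch pos esf] by (simp add: less_eq_complex_def star_star)
    have "cmod (u (f * y)) ^ 2 \<le> K * q"
      using cs r1 r0 q0 unfolding q_def[symmetric] star_star by (smt (verit) mult_right_mono)
    hence c1: "cmod (u (f * y)) \<le> sqrt (K * q)" using real_le_rsqrt by blast
    have "cmod (u y) \<le> cmod (u (f * y)) + cmod (u (y - f * y))"
      using clf_diff[OF lin, of y "f * y"] norm_triangle_ineq[of "u (f * y)" "u (y - f * y)"] by simp
    also have "cmod (u (y - f * y)) \<le> K * \<delta>"
      using bd[of "y - f * y"] nd K0 by (smt (verit) mult_left_mono)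
    finally show ?thesis using c1 by simp
  qed
  have "cmod (u y) \<le> sqrt (K * q)"
  proof (rule field_le_epsilon)
    fix \<epsilon> :: real assume ep: "\<epsilon> > 0"
    have "cmod (u y) \<le> sqrt (K * q) + K * (\<epsilon> / (K + 1))" using main[of "\<epsilon> / (K+1)"] ep K0 by simp
    also have "K * (\<epsilon> / (K + 1)) \<le> \<epsilon>" using ep K0 by (simp add: field_simps)
    finally show "cmod (u y) \<le> sqrt (K * q) + \<epsilon>" by simp
  qed
  hence "cmod (u y) ^ 2 \<le> sqrt (K * q) ^ 2" by (simp add: power_mono)
  thus ?thesis using K0 q0 unfolding q_def by simp
qed

lemma u_herm:
  assumes ch: "character scaleC e" and pos: "\<And>x. e (star x * x) = 0 \<Longrightarrow> 0 \<le> u (star x * x)"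
    and lin: "clinear_functional scaleC u" and bd: "\<And>x. cmod (u x) \<le> K * norm x" and K0: "K \<ge> 0"
    and ey: "e y = 0"
  shows "u (star y) = cnj (u y)"
proof -
  have main: "cmod (u (star y) - cnj (u y)) \<le> 2 * K * \<delta>" if dp: "\<delta> > 0" for \<delta>
  proof -
    obtain f where ef: "e f = 0" and esf: "e (star f) = 0" and nf: "norm f \<le> 1"
      and nd: "norm (y - f * y) \<le> \<delta>" using approx_unit[OF ch ey dp] by blast
    have hm: "u (star (star f) * y) = cnj (u (star y * star f))" by (rule J_herm[OF ch pos lin ey esf])
    hence mid: "u (star y * star f) = cnj (u (f * y))" by (simp add: star_star)
    have s1: "cmod (u (star y) - u (star y * star f)) \<le> K * \<delta>"
    proof -
      have "u (star y) - u (star y * star f) = u (star (y - f * y))"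
        using clf_diff[OF lin] by (simp add: star_diff star_mult)
      hence "cmod (u (star y) - u (star y * star f)) \<le> K * norm (y - f * y)" using bd[of "star (y - f * y)"] by simp
      thus ?thesis using nd K0 by (smt (verit) mult_left_mono)
    qed
    have s3: "cmod (u (f * y) - u y) \<le> K * \<delta>"
    proof -
      have "cmod (u (f * y) - u y) = cmod (u (y - f * y))"
        using clf_diff[OF lin] by (simp add: norm_minus_commute)
      also have "\<dots> \<le> K * norm (y - f * y)" by (rule bd)
      finally show ?thesis using nd K0 by (smt (verit) mult_left_mono)
    qed
    have eq: "u (star y) - cnj (u y) = (u (star y) - u (star y * star f)) + cnj (u (f * y) - u y)"
      using mid by simp
    have "cmod (u (star y) - cnj (u y)) \<le> cmod (u (star y) - u (star y * star f)) + cmod (cnj (u (f * y) - u y))"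
      unfolding eq by (rule norm_triangle_ineq)
    thus ?thesis using s1 s3 unfolding complex_mod_cnj by linarith
  qed
  have "cmod (u (star y) - cnj (u y)) \<le> 0"
  proof (rule field_le_epsilon)
    fix \<epsilon> :: real assume ep: "\<epsilon> > 0"
    have "cmod (u (star y) - cnj (u y)) \<le> 2 * K * (\<epsilon> / (2 * K + 1))" using main[of "\<epsilon> / (2*K+1)"] ep K0 by simp
    also have "2 * K * (\<epsilon> / (2 * K + 1)) \<le> \<epsilon>" using ep K0 by (simp add: field_simps)
    finally show "cmod (u (star y) - cnj (u y)) \<le> 0 + \<epsilon>" by simp
  qed
  thus ?thesis by simp
qed

end


theorem proposition3p2:
  fixes scaleC :: "complex \<Rightarrow> 'a::{banach, real_normed_algebra_1} \<Rightarrow> 'a"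
    and star :: "'a \<Rightarrow> 'a"
    and \<epsilon> u :: "'a \<Rightarrow> complex"
  assumes "unital_cstar_algebra scaleC star"
    and "character scaleC \<epsilon>"
    and "clinear_functional scaleC u" and "bounded_functional u"
    and "\<exists>x. u x \<noteq> 0"
    and "u 1 = 0"
    and "\<And>x. \<epsilon> (star x * x) = 0 \<Longrightarrow> 0 \<le> u (star x * x)"
  shows "\<exists>r::real. r > 0 \<and> (\<exists>v. cstar_state scaleC star v \<and>
           (\<forall>x. u x = complex_of_real r * (v x - \<epsilon> x)))"
proof -
  interpret A: unital_cstar_algebra scaleC star by fact
  note ch = assms(2) and lin = assms(3) and u1 = assms(6) and pos = assms(7)
  have elin: "clinear_functional scaleC \<epsilon>" and em: "\<And>a b. \<epsilon> (a*b) = \<epsilon> a * \<epsilon> b"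
    using ch unfolding character_def by blast+
  obtain K0 where bd0: "\<And>x. cmod (u x) \<le> K0 * norm x"
    using assms(4) unfolding bounded_functional_def by blast
  define K where "K = max K0 0"
  have K0: "K \<ge> 0" unfolding K_def by simp
  have bd: "cmod (u x) \<le> K * norm x" for x
    using bd0[of x] unfolding K_def by (smt (verit) mult_right_mono norm_ge_zero)
  define r where "r = K + 1"
  have rp: "r > 0" unfolding r_def using K0 by simp
  define v where "v x = \<epsilon> x + u x / complex_of_real r" for x
  have vlin: "clinear_functional scaleC v"
    unfolding clinear_functional_def v_def
    using clf_add[OF elin] clf_add[OF lin] clf_scale[OF elin] clf_scale[OF lin]
    by (simp add: algebra_simps add_divide_distrib)
  have v1: "v 1 = 1" unfolding v_def using A.char_one[OF ch] u1 by simp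
  have vpos: "0 \<le> v (star x * x)" for x
  proof -
    define l where "l = \<epsilon> x"
    define y where "y = x - scaleC l 1"
    have ey: "\<epsilon> y = 0" unfolding y_def l_def using clf_diff[OF elin] clf_scale[OF elin] A.char_one[OF ch] by simp
    have xy: "x = y + scaleC l 1" unfolding y_def by simp
    define w where "w = u y"
    define q where "q = Re (u (star y * y))"
    have Q: "u (star y * y) = of_real q"
      using A.J_pos[where u=u, OF ch pos ey] unfolding q_def by (simp add: less_eq_complex_def complex_eq_iff)
    have q0: "q \<ge> 0" using A.J_pos[where u=u, OF ch pos ey] unfolding q_def by (simp add: less_eq_complex_def)
    have hw: "u (star y) = cnj w" unfolding w_def by (rule A.u_herm[OF ch pos lin bd K0 ey])
    have cs: "cmod w ^ 2 \<le> K * q" unfolding w_def q_def by (rule A.u_CS[OF ch pos lin bd K0 ey])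
    have ux: "u (star x * x) = of_real q + l * cnj w + cnj l * w"
      unfolding xy A.u_expand[OF lin] using Q hw u1 unfolding w_def by simp
    have ex: "\<epsilon> (star x * x) = cnj l * l" using em A.char_star[OF ch] unfolding l_def by simp
    define P where "P = cnj l * w"
    have lw: "l * cnj w = cnj P" unfolding P_def by simp
    have val: "v (star x * x) = of_real (cmod l ^ 2 + (q + 2 * Re P) / r)"
    proof -
      have "cnj l * l = of_real (cmod l ^ 2)" by (metis complex_norm_square mult.commute)
      moreover have "of_real q + cnj P + P = of_real (q + 2 * Re P)" by (simp add: complex_eq_iff)
      ultimately show ?thesis unfolding v_def ux ex lw P_def[symmetric] by simp
    qed
    have rP: "- Re P \<le> cmod l * cmod w"
      using abs_Re_le_cmod[of P] unfolding P_def by (simp add: norm_mult)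
    have cs': "cmod w ^ 2 \<le> r * q" using cs q0 unfolding r_def by (simp add: algebra_simps)
    define Aa where "Aa = cmod l"
    define W where "W = cmod w"
    have h1: "r * (r * Aa^2 + q - 2 * Aa * W) = (r * Aa - W)^2 + (r * q - W^2)"
      by (simp add: power2_eq_square algebra_simps)
    have "0 \<le> (r * Aa - W)^2 + (r * q - W^2)" using cs' unfolding W_def by simp
    hence "0 \<le> r * (r * Aa^2 + q - 2 * Aa * W)" unfolding h1 .
    hence "0 \<le> r * Aa^2 + q - 2 * Aa * W" using rp by (simp add: zero_le_mult_iff)
    hence "0 \<le> r * cmod l ^ 2 + q + 2 * Re P" using rP unfolding Aa_def W_def by linarith
    hence "0 \<le> cmod l ^ 2 + (q + 2 * Re P) / r" using rp by (simp add: field_simps)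
    thus ?thesis unfolding val by (simp add: less_eq_complex_def)
  qed
  have st: "cstar_state scaleC star v" unfolding cstar_state_def using vlin vpos v1 by blast
  have "u x = complex_of_real r * (v x - \<epsilon> x)" for x unfolding v_def using rp by simp
  thus ?thesis using st rp by blast
qed


end
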